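(* Let $0<\beta<1$ and $\boldsymbol\lambda=(\lambda_j)_{j\ge1}$ nonnegative reals with $\delta=\sum_j\lambda_j\in(0,\infty)$ and $\sum_j t^j\lambda_j<\infty$ for $0<|t|<M$, some $M>0$. Let $Y_1,Y_2,\dots$ be i.i.d. with $\mathbb P(Y_1=j)=\lambda_j/\delta$, $j\in\mathbb N$, independent of a time fractional Poisson process $\{N_\beta(t,\delta)\}_{t\ge0}$, let $H_\beta(t,\boldsymbol\lambda)=\sum_{j=1}^{N_\beta(t,\delta)}Y_j$, $q(n|t,\boldsymbol\lambda)=\mathbb P(H_\beta(t,\boldsymbol\lambda)=n)$, $h_k(n)=\mathbb P(Y_1+\cdots+Y_k=n)$, and $p_\beta(n|t,\delta)=\mathbb P(N_\beta(t,\delta)=n)$. Then, with $\partial_t^\beta$ the Caputo fractional derivative in $t$, $$\partial_t^\beta q(0|t,\boldsymbol\lambda)=-\delta\,p_\beta(0|t,\delta),$$ and for $n\ge1$ $$\partial_t^\beta q(n|t,\boldsymbol\lambda)=-\delta\,q(n|t,\boldsymbol\lambda)+\delta\sum_{k=1}^n h_k(n)\,p_\beta(k-1|t,\delta).$$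
   Context: The time fractional Poisson process $N_\beta(t,\lambda)$ ($0<\beta<1$, $\lambda>0$) is the renewal counting process $\max\{n:U_1+\cdots+U_n\le t\}$ with $U_i$ i.i.d. and $\mathbb P(U_1\le u)=1-M_\beta(-\lambda u^\beta)$, $M_\beta(z)=\sum_{k\ge0}z^k/\Gamma(\beta k+1)$; its PMF is $p_\beta(n|t,\lambda)=\frac{(\lambda t^\beta)^n}{n!}M_\beta^{(n)}(-\lambda t^\beta)$ for $t>0$, with $p_\beta(0|0,\lambda)=1$ and $p_\beta(n|0,\lambda)=0$ for $n\ge1$. For $0<\beta<1$ the Caputo derivative is $\partial_t^\beta f(t)=\frac{1}{\Gamma(1-\beta)}\int_0^t f'(s)(t-s)^{-\beta}\,ds$. *)

theory Defs
  imports "HOL-Probability.Probability"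
begin

definition mittag_leffler :: "real \<Rightarrow> real \<Rightarrow> real" where
  "mittag_leffler \<beta> z = (\<Sum>k. z ^ k / Gamma (\<beta> * real k + 1))"

definition tfpp_pmf :: "real \<Rightarrow> real \<Rightarrow> nat \<Rightarrow> real \<Rightarrow> real" where
  "tfpp_pmf \<beta> lam n t =
     (if t = 0 then (if n = 0 then 1 else 0)
      else (lam * t powr \<beta>) ^ n / fact n * (deriv ^^ n) (mittag_leffler \<beta>) (- lam * t powr \<beta>))"

definition has_caputo_deriv :: "real \<Rightarrow> (real \<Rightarrow> real) \<Rightarrow> real \<Rightarrow> real \<Rightarrow> bool" where
  "has_caputo_deriv \<beta> f t D \<longleftrightarrow>
     (\<forall>s\<in>{0<..<t}. f differentiable (at s)) \<and>
     ((\<lambda>s. deriv f s * (t - s) powr (- \<beta>) / Gamma (1 - \<beta>)) has_integral D) {0..t}"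

end

theory Submission
  imports Defs
begin
lemma beta_integral_t:
  fixes a b t :: real
  assumes a: "a > 0" and b: "b > 0" and t: "t > 0"
  shows "((\<lambda>s. s powr (a - 1) * (t - s) powr (b - 1)) has_integral t powr (a + b - 1) * Beta a b) {0..t}"
proof -
  let ?g = "\<lambda>s. s powr (a - 1) * (t - s) powr (b - 1)"
  have "((\<lambda>u. t powr (a + b - 2) * (u powr (a - 1) * (1 - u) powr (b - 1))) has_integral
          t powr (a + b - 2) * Beta a b) {0..1}"
    by (intro has_integral_mult_right has_integral_Beta_real a b)
  hence "((\<lambda>u. ?g (t *\<^sub>R u + 0)) has_integral t powr (a + b - 2) * Beta a b) {0..1}"
  proof (rule has_integral_spike[where S = "{}", rotated 2])
    fix u assume u: "u \<in> {0..1::real} - {}"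
    hence u01: "0 \<le> u" "u \<le> 1" using t by auto
    have "(t * u) powr (a - 1) = t powr (a - 1) * u powr (a - 1)"
      using u01 t by (simp add: powr_mult)
    moreover have "(t - t * u) powr (b - 1) = t powr (b - 1) * (1 - u) powr (b - 1)"
    proof -
      have "t - t * u = t * (1 - u)" by (simp add: algebra_simps)
      thus ?thesis using u01 t by (simp add: powr_mult)
    qed
    moreover have "t powr (a + b - 2) = t powr (a - 1) * t powr (b - 1)"
      by (simp add: flip: powr_add)
    ultimately show "?g (t *\<^sub>R u + 0) = t powr (a + b - 2) * (u powr (a - 1) * (1 - u) powr (b - 1))"
      by (simp add: mult_ac)
  qed auto
  hence I1: "((\<lambda>x. (t * x) powr (a - 1) * (t - t * x) powr (b - 1)) has_integral t powr (a + b - 2) * Beta a b) {0..1}"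
    by simp
  have eq: "inverse t * (t powr (a + b - 1) * Beta a b) = t powr (a + b - 2) * Beta a b"
    using t by (simp add: powr_diff field_simps powr_add power2_eq_square)
  have "((\<lambda>x. (t * x) powr (a - 1) * (t - t * x) powr (b - 1)) has_integral inverse t * (t powr (a + b - 1) * Beta a b)) {0..1}"
    unfolding eq by (rule I1)
  moreover have "cbox ((0 - 0) /\<^sub>R t) ((t - 0) /\<^sub>R t) = {0..1}" using t by auto
  ultimately have "(?g has_integral t powr (a + b - 1) * Beta a b) (cbox 0 t)"
    using has_integral_affinity_iff[OF t, where f="?g" and I="t powr (a + b - 1) * Beta a b" and c=0 and a=0 and b=t]
    by (simp del: Beta_def)
  thus ?thesis by simp
qed

lemma Gamma_plus1_real: "x > (0::real) \<Longrightarrow> Gamma (x + 1) = x * Gamma x"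
  by (rule Gamma_plus1) (auto dest: nonpos_Ints_nonpos)

lemma Gamma_shift_bound:
  fixes x \<beta> :: real
  assumes x: "x > 0" and b: "0 < \<beta>" "\<beta> < 1"
  shows "Gamma (x + 1) \<le> Gamma (x + \<beta>) * (x + \<beta>) powr (1 - \<beta>)"
proof -
  have conv: "(ln \<circ> Gamma) ((1 - (1 - \<beta>)) *\<^sub>R (x + \<beta>) + (1 - \<beta>) *\<^sub>R (x + \<beta> + 1))
        \<le> (1 - (1 - \<beta>)) * (ln \<circ> Gamma) (x + \<beta>) + (1 - \<beta>) * (ln \<circ> Gamma) (x + \<beta> + 1)"
    by (rule convex_onD[OF log_convex_Gamma_real]) (use x b in auto)
  have comb: "(1 - (1 - \<beta>)) *\<^sub>R (x + \<beta>) + (1 - \<beta>) *\<^sub>R (x + \<beta> + 1) = x + 1"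
    by (simp add: algebra_simps)
  have L: "ln (Gamma (x + 1)) \<le> \<beta> * ln (Gamma (x + \<beta>)) + (1 - \<beta>) * ln (Gamma (x + \<beta> + 1))"
    using conv unfolding comb o_def by simp
  have G: "Gamma (x + \<beta> + 1) = (x + \<beta>) * Gamma (x + \<beta>)"
    using x b by (intro Gamma_plus1_real) auto
  have pos: "Gamma (x + \<beta>) > 0" "x + \<beta> > 0" using x b by auto
  have lnG: "ln (Gamma (x + \<beta> + 1)) = ln (x + \<beta>) + ln (Gamma (x + \<beta>))"
  proof -
    have "Gamma (x + \<beta>) \<noteq> 0" "x + \<beta> \<noteq> 0" using pos by linarith+
    thus ?thesis unfolding G ln_mult by simp
  qed
  have "ln (Gamma (x + 1)) \<le> \<beta> * ln (Gamma (x + \<beta>)) + (1 - \<beta>) * (ln (x + \<beta>) + ln (Gamma (x + \<beta>)))"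
    using L unfolding lnG .
  also have "\<dots> = ln (Gamma (x + \<beta>)) + (1 - \<beta>) * ln (x + \<beta>)" by (simp add: algebra_simps)
  finally have "ln (Gamma (x + 1)) \<le> ln (Gamma (x + \<beta>)) + (1 - \<beta>) * ln (x + \<beta>)" .
  hence "exp (ln (Gamma (x + 1))) \<le> exp (ln (Gamma (x + \<beta>)) + (1 - \<beta>) * ln (x + \<beta>))"
    by simp
  also have "\<dots> = Gamma (x + \<beta>) * (x + \<beta>) powr (1 - \<beta>)"
    using pos by (simp add: exp_add powr_def mult_ac)
  finally show ?thesis using x by simp
qed

lemma ml_summable:
  fixes \<beta> z :: real
  assumes b: "0 < \<beta>" "\<beta> < 1"
  shows "summable (\<lambda>m. z ^ m / Gamma (\<beta> * real m + 1))"
proof -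
  define K where "K = (4 * \<bar>z\<bar> + 1) powr (1 / \<beta>)"
  obtain N :: nat where N: "K \<le> \<beta> * real N + 1"
  proof -
    obtain N :: nat where "K / \<beta> \<le> real N" using real_arch_simple by blast
    hence "K \<le> \<beta> * real N" using b by (simp add: field_simps)
    thus ?thesis using that[of N] by simp
  qed
  show ?thesis
  proof (rule summable_ratio_test[where c = "1/2" and N = N])
    fix n assume n: "n \<ge> N"
    define x where "x = \<beta> * real n + 1"
    have x1: "x \<ge> 1" using b by (simp add: x_def)
    have xK: "x \<ge> K" using N n b unfolding x_def
      by (smt (verit) mult_left_mono of_nat_mono)
    have Gx: "Gamma x > 0" using x1 by auto
    have Gxb: "Gamma (x + \<beta>) > 0" using x1 b by auto
    have "x powr \<beta> \<ge> K powr \<beta>"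
      using xK b by (intro powr_mono2) (auto simp: K_def)
    hence xb: "x powr \<beta> \<ge> 4 * \<bar>z\<bar> + 1"
      using b by (simp add: K_def powr_powr)
    have "(x + \<beta>) powr (1 - \<beta>) \<le> (2 * x) powr (1 - \<beta>)"
      using b x1 by (intro powr_mono2) auto
    also have "\<dots> = 2 powr (1 - \<beta>) * x powr (1 - \<beta>)" using x1 by (simp add: powr_mult)
    also have "\<dots> \<le> 2 * x powr (1 - \<beta>)"
    proof -
      have "2 powr (1 - \<beta>) \<le> 2 powr 1" using b by (intro powr_mono) auto
      thus ?thesis by (intro mult_right_mono) auto
    qed
    finally have A: "(x + \<beta>) powr (1 - \<beta>) \<le> 2 * x powr (1 - \<beta>)" .
    have "x * Gamma x = Gamma (x + 1)" using x1 by (simp add: Gamma_plus1_real)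
    also have "\<dots> \<le> Gamma (x + \<beta>) * (x + \<beta>) powr (1 - \<beta>)"
      using x1 b by (intro Gamma_shift_bound) auto
    also have "\<dots> \<le> Gamma (x + \<beta>) * (2 * x powr (1 - \<beta>))"
      using A Gxb by (intro mult_left_mono) auto
    finally have B: "x * Gamma x \<le> 2 * x powr (1 - \<beta>) * Gamma (x + \<beta>)" by (simp add: mult_ac)
    have xeq: "x powr \<beta> * x powr (1 - \<beta>) = x" using x1 by (simp flip: powr_add)
    have "x powr (1 - \<beta>) * (x powr \<beta> * Gamma x) = x * Gamma x"
      by (metis xeq mult.assoc mult.commute)
    also have "\<dots> \<le> x powr (1 - \<beta>) * (2 * Gamma (x + \<beta>))" using B by (simp add: mult_ac)
    finally have "x powr \<beta> * Gamma x \<le> 2 * Gamma (x + \<beta>)"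
      using x1 by (subst (asm) mult_le_cancel_left_pos) auto
    moreover have "(4 * \<bar>z\<bar> + 1) * Gamma x \<le> x powr \<beta> * Gamma x"
      using xb Gx by (intro mult_right_mono) auto
    ultimately have C: "(4 * \<bar>z\<bar> + 1) * Gamma x \<le> 2 * Gamma (x + \<beta>)" by linarith
    have C': "4 * (\<bar>z\<bar> * Gamma x) + Gamma x \<le> 2 * Gamma (x + \<beta>)"
      using C by (simp add: algebra_simps)
    have "\<bar>z\<bar> ^ Suc n / Gamma (x + \<beta>) \<le> 1 / 2 * (\<bar>z\<bar> ^ n / Gamma x)"
    proof -
      have "\<bar>z\<bar> ^ Suc n * (2 * Gamma x) \<le> \<bar>z\<bar> ^ n * Gamma (x + \<beta>)"
      proof -
        have "2 * (\<bar>z\<bar> * Gamma x) \<le> Gamma (x + \<beta>)"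
          using C' Gx by linarith
        hence "\<bar>z\<bar> ^ n * (2 * (\<bar>z\<bar> * Gamma x)) \<le> \<bar>z\<bar> ^ n * Gamma (x + \<beta>)"
          by (intro mult_left_mono) auto
        thus ?thesis by (simp add: mult_ac)
      qed
      thus ?thesis using Gx Gxb by (simp add: field_simps)
    qed
    moreover have e: "\<beta> * real (Suc n) + 1 = x + \<beta>" by (simp add: x_def algebra_simps)
    ultimately show "norm (z ^ Suc n / Gamma (\<beta> * real (Suc n) + 1)) \<le> 1 / 2 * norm (z ^ n / Gamma (\<beta> * real n + 1))"
      unfolding e x_def[symmetric] using Gx Gxb by (simp add: norm_divide power_abs abs_of_pos abs_mult)
  qed simp
qed

definition mlc :: "real \<Rightarrow> nat \<Rightarrow> real" where
  "mlc \<beta> m = 1 / Gamma (\<beta> * real m + 1)"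

lemma mlc_pos: "\<beta> > 0 \<Longrightarrow> mlc \<beta> m > 0"
proof -
  assume b: "\<beta> > 0"
  have "\<beta> * real m \<ge> 0" using b by simp
  hence "\<beta> * real m + 1 > 0" by linarith
  thus ?thesis unfolding mlc_def by simp
qed

lemma ml_eq: "mittag_leffler \<beta> = (\<lambda>z. \<Sum>m. mlc \<beta> m * z ^ m)"
  unfolding mittag_leffler_def mlc_def by (simp add: field_simps)

lemma mlc_summable:
  assumes "0 < \<beta>" "\<beta> < 1"
  shows "summable (\<lambda>m. mlc \<beta> m * z ^ m)"
  using ml_summable[OF assms, of z] unfolding mlc_def by (simp add: field_simps)

lemma diffs_pow_summable:
  fixes c :: "nat \<Rightarrow> real"
  assumes "\<And>y. summable (\<lambda>n. c n * y ^ n)"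
  shows "summable (\<lambda>n. (diffs ^^ k) c n * y ^ n)"
proof (induction k arbitrary: y)
  case 0 thus ?case using assms by simp
next
  case (Suc k) thus ?case by (simp add: termdiff_converges_all)
qed

lemma deriv_pow_ps:
  fixes c :: "nat \<Rightarrow> real"
  assumes "\<And>y. summable (\<lambda>n. c n * y ^ n)"
  shows "(deriv ^^ k) (\<lambda>z. \<Sum>n. c n * z ^ n) = (\<lambda>z. \<Sum>n. (diffs ^^ k) c n * z ^ n)"
proof (induction k)
  case 0 thus ?case by simp
next
  case (Suc k)
  show ?case
  proof
    fix z :: real
    have "(deriv ^^ Suc k) (\<lambda>z. \<Sum>n. c n * z ^ n) z = deriv (\<lambda>z. \<Sum>n. (diffs ^^ k) c n * z ^ n) z"
      using Suc by simp
    also have "\<dots> = (\<Sum>n. diffs ((diffs ^^ k) c) n * z ^ n)"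
      by (intro DERIV_imp_deriv termdiffs_strong_converges_everywhere diffs_pow_summable assms)
    finally show "(deriv ^^ Suc k) (\<lambda>z. \<Sum>n. c n * z ^ n) z = (\<Sum>n. (diffs ^^ Suc k) c n * z ^ n)"
      by simp
  qed
qed

lemma diffs_pow_eq:
  fixes c :: "nat \<Rightarrow> real"
  shows "(diffs ^^ k) c n = fact (n + k) / fact n * c (n + k)"
proof (induction k arbitrary: n)
  case 0 thus ?case by simp
next
  case (Suc k)
  have "(diffs ^^ Suc k) c n = diffs ((diffs ^^ k) c) n" by simp
  also have "\<dots> = real (Suc n) * (diffs ^^ k) c (Suc n)" by (simp only: diffs_def)
  also have "\<dots> = real (Suc n) * (fact (Suc n + k) / fact (Suc n) * c (Suc n + k))"
    by (simp only: Suc.IH)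
  also have "\<dots> = fact (n + Suc k) / fact n * c (n + Suc k)"
  proof -
    have e1: "fact (Suc n + k) = real (Suc (n + k)) * (fact (n + k) :: real)"
      by (simp add: fact_Suc)
    have e2: "fact (Suc n) = real (Suc n) * (fact n :: real)" by (simp add: fact_Suc)
    have e3: "fact (n + Suc k) = real (Suc (n + k)) * (fact (n + k) :: real)"
      by (simp add: fact_Suc)
    have e4: "Suc n + k = n + Suc k" by simp
    have "fact n > (0::real)" by simp
    thus ?thesis unfolding e2 e4 by simp
  qed
  finally show ?case .
qed

definition pcoef :: "real \<Rightarrow> nat \<Rightarrow> nat \<Rightarrow> real" where
  "pcoef \<delta> k m = real (m choose k) * (-1) ^ (m - k) * \<delta> ^ m"

lemma tfpp_series:
  assumes b: "0 < \<beta>" "\<beta> < 1" and s: "s > 0"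
  shows "tfpp_pmf \<beta> \<delta> k s = (\<Sum>m. pcoef \<delta> k m * mlc \<beta> m * (s powr \<beta>) ^ m)"
proof -
  define u where "u = s powr \<beta>"
  define f where "f j = (\<delta> * u) ^ k / fact k * ((diffs ^^ k) (mlc \<beta>) j * (- \<delta> * u) ^ j)" for j
  define g where "g m = pcoef \<delta> k m * mlc \<beta> m * u ^ m" for m
  have sm: "summable (\<lambda>j. (diffs ^^ k) (mlc \<beta>) j * (- \<delta> * u) ^ j)"
    by (intro diffs_pow_summable mlc_summable b)
  have T: "tfpp_pmf \<beta> \<delta> k s = (\<delta> * u) ^ k / fact k * (\<Sum>j. (diffs ^^ k) (mlc \<beta>) j * (- \<delta> * u) ^ j)"
    using s unfolding tfpp_pmf_def u_def
    by (simp add: ml_eq deriv_pow_ps[OF mlc_summable[OF b]])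
  have fs: "f sums tfpp_pmf \<beta> \<delta> k s"
    unfolding T f_def by (intro sums_mult summable_sums sm)
  have fg: "f j = g (j + k)" for j
  proof -
    have "real ((j + k) choose k) = fact (j + k) / (fact k * fact j)"
      by (subst binomial_fact) auto
    hence "fact (j + k) / fact j = fact k * real ((j + k) choose k)"
      by (simp add: field_simps)
    moreover have "(- \<delta> * u) ^ j = (-1) ^ j * \<delta> ^ j * u ^ j"
      proof -
      have "- \<delta> * u = (-1) * \<delta> * u" by simp
      thus ?thesis by (simp only: power_mult_distrib)
    qed
    ultimately show ?thesis
      unfolding f_def g_def pcoef_def diffs_pow_eq
      by (simp add: power_mult_distrib power_add)
  qed
  have "(\<lambda>j. g (j + k)) = f" using fg by auto
  hence "(\<lambda>j. g (j + k)) sums tfpp_pmf \<beta> \<delta> k s" using fs by simp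
  hence "g sums (tfpp_pmf \<beta> \<delta> k s + (\<Sum>i<k. g i))" by (simp add: sums_iff_shift)
  moreover have "(\<Sum>i<k. g i) = 0" by (intro sum.neutral) (auto simp: g_def pcoef_def)
  ultimately have "g sums tfpp_pmf \<beta> \<delta> k s" by simp
  thus ?thesis unfolding g_def u_def by (simp add: sums_iff)
qed

lemma pcoef_rec:
  "pcoef \<delta> k (Suc m) = - \<delta> * pcoef \<delta> k m + (if k = 0 then 0 else \<delta> * pcoef \<delta> (k - 1) m)"
proof (cases k)
  case 0 thus ?thesis by (simp add: pcoef_def)
next
  case (Suc k')
  have A: "real (m choose Suc k') * (-1) ^ (Suc m - Suc k') = - (real (m choose Suc k') * (-1) ^ (m - Suc k'))"
  proof (cases "Suc k' \<le> m")
    case True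
    hence "Suc m - Suc k' = Suc (m - Suc k')" by simp
    thus ?thesis by simp
  next
    case False thus ?thesis by simp
  qed
  have "pcoef \<delta> k (Suc m) = real (m choose k') * (-1) ^ (m - k') * \<delta> ^ Suc m
      + real (m choose Suc k') * (-1) ^ (Suc m - Suc k') * \<delta> ^ Suc m"
    unfolding pcoef_def Suc by (simp add: algebra_simps)
  also have "\<dots> = - \<delta> * pcoef \<delta> k m + \<delta> * pcoef \<delta> (k - 1) m"
    unfolding pcoef_def Suc using A by (simp add: algebra_simps)
  finally show ?thesis using Suc by simp
qed

lemma pcoef_bound: "\<delta> \<ge> 0 \<Longrightarrow> \<bar>pcoef \<delta> k m\<bar> \<le> (2 * \<delta>) ^ m"
proof -
  assume d: "\<delta> \<ge> 0"
  have "\<bar>pcoef \<delta> k m\<bar> = real (m choose k) * \<delta> ^ m"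
    using d by (simp add: pcoef_def abs_mult power_abs)
  also have "\<dots> \<le> 2 ^ m * \<delta> ^ m"
  proof (rule mult_right_mono)
    have "m choose k \<le> 2 ^ m" by (rule binomial_le_pow2)
    thus "real (m choose k) \<le> 2 ^ m" by (metis of_nat_le_iff of_nat_numeral of_nat_power)
  qed (use d in simp)
  finally show ?thesis by (simp add: power_mult_distrib)
qed

definition caputo2 :: "real \<Rightarrow> (real \<Rightarrow> real) \<Rightarrow> real \<Rightarrow> real \<Rightarrow> bool" where
  "caputo2 \<beta> f t D \<longleftrightarrow> (\<exists>f'. (\<forall>s\<in>{0<..<t}. (f has_real_derivative f' s) (at s)) \<and>
     ((\<lambda>s. f' s * (t - s) powr (- \<beta>) / Gamma (1 - \<beta>)) has_integral D) {0..t})"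

lemma caputo2_imp:
  assumes "caputo2 \<beta> f t D"
  shows "has_caputo_deriv \<beta> f t D"
proof -
  obtain f' where d: "\<forall>s\<in>{0<..<t}. (f has_real_derivative f' s) (at s)"
    and i: "((\<lambda>s. f' s * (t - s) powr (- \<beta>) / Gamma (1 - \<beta>)) has_integral D) {0..t}"
    using assms unfolding caputo2_def by blast
  have "\<forall>s\<in>{0<..<t}. f differentiable (at s)"
    using d by (blast intro: differentiableI has_field_derivative_imp_has_derivative)
  moreover have "((\<lambda>s. deriv f s * (t - s) powr (- \<beta>) / Gamma (1 - \<beta>)) has_integral D) {0..t}"
  proof (rule has_integral_spike[OF _ _ i])
    show "negligible {0, t}" by simp
    fix s assume "s \<in> {0..t} - {0, t}"
    hence "s \<in> {0<..<t}" by auto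
    thus "deriv f s * (t - s) powr (- \<beta>) / Gamma (1 - \<beta>) = f' s * (t - s) powr (- \<beta>) / Gamma (1 - \<beta>)"
      using d by (simp add: DERIV_imp_deriv)
  qed
  ultimately show ?thesis unfolding has_caputo_deriv_def by blast
qed

lemma caputo2_cong:
  assumes "\<And>s. s > 0 \<Longrightarrow> f s = g s" and "caputo2 \<beta> g t D"
  shows "caputo2 \<beta> f t D"
proof -
  obtain f' where d: "\<forall>s\<in>{0<..<t}. (g has_real_derivative f' s) (at s)"
    and i: "((\<lambda>s. f' s * (t - s) powr (- \<beta>) / Gamma (1 - \<beta>)) has_integral D) {0..t}"
    using assms unfolding caputo2_def by blast
  have "\<forall>s\<in>{0<..<t}. (f has_real_derivative f' s) (at s)"
  proof
    fix s assume s: "s \<in> {0<..<t}"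
    show "(f has_real_derivative f' s) (at s)"
      by (rule has_field_derivative_transform_within_open[OF d[rule_format, OF s], of "{0<..}"])
         (use s assms(1) in auto)
  qed
  with i show ?thesis unfolding caputo2_def by blast
qed

lemma caputo2_sum:
  assumes "finite K" and "\<And>k. k \<in> K \<Longrightarrow> caputo2 \<beta> (f k) t (D k)"
  shows "caputo2 \<beta> (\<lambda>s. \<Sum>k\<in>K. c k * f k s) t (\<Sum>k\<in>K. c k * D k)"
proof -
  have "\<forall>k\<in>K. \<exists>f'. (\<forall>s\<in>{0<..<t}. (f k has_real_derivative f' s) (at s)) \<and>
     ((\<lambda>s. f' s * (t - s) powr (- \<beta>) / Gamma (1 - \<beta>)) has_integral D k) {0..t}"
    using assms(2) unfolding caputo2_def by blast
  then obtain F where F: "\<And>k. k \<in> K \<Longrightarrow> (\<forall>s\<in>{0<..<t}. (f k has_real_derivative F k s) (at s)) \<and>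
     ((\<lambda>s. F k s * (t - s) powr (- \<beta>) / Gamma (1 - \<beta>)) has_integral D k) {0..t}"
    by metis
  have "\<forall>s\<in>{0<..<t}. ((\<lambda>s. \<Sum>k\<in>K. c k * f k s) has_real_derivative (\<Sum>k\<in>K. c k * F k s)) (at s)"
    using F by (auto intro!: DERIV_sum DERIV_cmult)
  moreover have "((\<lambda>s. (\<Sum>k\<in>K. c k * F k s) * (t - s) powr (- \<beta>) / Gamma (1 - \<beta>)) has_integral (\<Sum>k\<in>K. c k * D k)) {0..t}"
  proof -
    have "((\<lambda>s. \<Sum>k\<in>K. c k * (F k s * (t - s) powr (- \<beta>) / Gamma (1 - \<beta>))) has_integral (\<Sum>k\<in>K. c k * D k)) {0..t}"
      using F by (intro has_integral_sum assms(1) has_integral_mult_right) auto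
    moreover have "(\<lambda>s. (\<Sum>k\<in>K. c k * F k s) * (t - s) powr (- \<beta>) / Gamma (1 - \<beta>)) =
       (\<lambda>s. \<Sum>k\<in>K. c k * (F k s * (t - s) powr (- \<beta>) / Gamma (1 - \<beta>)))"
    proof
      fix s
      have "(\<Sum>k\<in>K. c k * F k s) * (t - s) powr (- \<beta>) / Gamma (1 - \<beta>)
          = (\<Sum>k\<in>K. c k * F k s * (t - s) powr (- \<beta>) / Gamma (1 - \<beta>))"
        by (simp add: sum_distrib_right sum_divide_distrib)
      also have "\<dots> = (\<Sum>k\<in>K. c k * (F k s * (t - s) powr (- \<beta>) / Gamma (1 - \<beta>)))"
        by (intro sum.cong) auto
      finally show "(\<Sum>k\<in>K. c k * F k s) * (t - s) powr (- \<beta>) / Gamma (1 - \<beta>)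
          = (\<Sum>k\<in>K. c k * (F k s * (t - s) powr (- \<beta>) / Gamma (1 - \<beta>)))" .
    qed
    ultimately show ?thesis by simp
  qed
  ultimately show ?thesis unfolding caputo2_def
    by (intro exI[of _ "\<lambda>s. \<Sum>k\<in>K. c k * F k s"] conjI)
qed

lemma powr_pow_eq: "t > 0 \<Longrightarrow> (t powr \<beta>) ^ n = t powr (\<beta> * real n)"
  by (simp add: powr_powr flip: powr_realpow)

lemma term_integral:
  fixes \<beta> t :: real and n :: nat
  assumes b: "0 < \<beta>" "\<beta> < 1" and t: "t > 0"
  shows "((\<lambda>s. (diffs (\<lambda>m. a m * mlc \<beta> m) n * \<beta> / Gamma (1 - \<beta>)) *
            (s powr (\<beta> * real (Suc n) - 1) * (t - s) powr ((1 - \<beta>) - 1)))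
          has_integral a (Suc n) * mlc \<beta> n * (t powr \<beta>) ^ n) {0..t}"
proof -
  define x where "x = \<beta> * real (Suc n)"
  have x: "x > 0" using b by (simp add: x_def)
  have G: "Gamma (1 - \<beta>) > 0" using b by auto
  have Gx: "Gamma x > 0" using x by auto
  have Gn: "Gamma (\<beta> * real n + 1) > 0"
  proof -
    have "\<beta> * real n \<ge> 0" using b by simp
    thus ?thesis by (intro Gamma_real_pos) linarith
  qed
  have e1: "x + (1 - \<beta>) - 1 = \<beta> * real n" by (simp add: x_def algebra_simps)
  have e2: "x + (1 - \<beta>) = \<beta> * real n + 1" by (simp add: x_def algebra_simps)
  have I: "((\<lambda>s. s powr (x - 1) * (t - s) powr ((1 - \<beta>) - 1)) has_integral
            t powr (\<beta> * real n) * Beta x (1 - \<beta>)) {0..t}"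
    using beta_integral_t[OF x _ t, of "1 - \<beta>"] b unfolding e1 by simp
  have val: "(diffs (\<lambda>m. a m * mlc \<beta> m) n * \<beta> / Gamma (1 - \<beta>)) * (t powr (\<beta> * real n) * Beta x (1 - \<beta>))
        = a (Suc n) * mlc \<beta> n * (t powr \<beta>) ^ n"
  proof -
    have gx1: "Gamma (x + 1) = x * Gamma x" using x by (rule Gamma_plus1_real)
    have d: "diffs (\<lambda>m. a m * mlc \<beta> m) n = real (Suc n) * a (Suc n) / (x * Gamma x)"
      unfolding diffs_def mlc_def x_def[symmetric] gx1 by simp
    have bb: "Beta x (1 - \<beta>) = Gamma x * Gamma (1 - \<beta>) / Gamma (\<beta> * real n + 1)"
      unfolding Beta_def e2 ..
    have p: "(t powr \<beta>) ^ n = t powr (\<beta> * real n)" using t by (rule powr_pow_eq)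
    have m: "mlc \<beta> n = 1 / Gamma (\<beta> * real n + 1)" by (simp add: mlc_def)
    have xe: "\<beta> = x / real (Suc n)" by (simp add: x_def)
    have "real (Suc n) * a (Suc n) / (x * Gamma x) * \<beta> / Gamma (1 - \<beta>) *
        (t powr (\<beta> * real n) * (Gamma x * Gamma (1 - \<beta>) / Gamma (\<beta> * real n + 1)))
       = a (Suc n) * (1 / Gamma (\<beta> * real n + 1)) * t powr (\<beta> * real n)"
    proof -
      have "real (Suc n) * a (Suc n) / (x * Gamma x) * \<beta> = a (Suc n) / Gamma x"
      proof -
        have nz: "Gamma x \<noteq> 0" "x \<noteq> 0" "real (Suc n) \<noteq> 0" using x Gx by linarith+
        show ?thesis by (subst xe) (simp add: nz field_simps del: of_nat_Suc)
      qed
      moreover have alg: "\<And>K G Gx Gn P A :: real. K = A / Gx \<Longrightarrow> G \<noteq> 0 \<Longrightarrow> Gx \<noteq> 0 \<Longrightarrow> Gn \<noteq> 0 \<Longrightarrow>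
          K / G * (P * (Gx * G / Gn)) = A * (1 / Gn) * P"
        by (simp add: field_simps)
      moreover have "Gamma (1 - \<beta>) \<noteq> 0" "Gamma x \<noteq> 0" "Gamma (\<beta> * real n + 1) \<noteq> 0"
        using G Gx Gn by linarith+
      ultimately show ?thesis by blast
    qed
    thus ?thesis unfolding d bb p m .
  qed
  have "((\<lambda>s. (diffs (\<lambda>m. a m * mlc \<beta> m) n * \<beta> / Gamma (1 - \<beta>)) *
            (s powr (x - 1) * (t - s) powr ((1 - \<beta>) - 1)))
          has_integral a (Suc n) * mlc \<beta> n * (t powr \<beta>) ^ n) {0..t}"
    using has_integral_mult_right[OF I, of "diffs (\<lambda>m. a m * mlc \<beta> m) n * \<beta> / Gamma (1 - \<beta>)"]
    unfolding val .
  thus ?thesis unfolding x_def .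
qed

lemma caputo2_ps:
  fixes a :: "nat \<Rightarrow> real" and \<beta> t :: real
  assumes b: "0 < \<beta>" "\<beta> < 1" and t: "t > 0"
    and H: "\<And>y. summable (\<lambda>m. \<bar>a m\<bar> * mlc \<beta> m * y ^ m)"
  shows "caputo2 \<beta> (\<lambda>s. \<Sum>m. a m * mlc \<beta> m * (s powr \<beta>) ^ m) t
           (\<Sum>m. a (Suc m) * mlc \<beta> m * (t powr \<beta>) ^ m)"
proof -
  define c where "c m = a m * mlc \<beta> m" for m
  have mpos: "mlc \<beta> m > 0" for m using b(1) by (rule mlc_pos)
  have cs: "summable (\<lambda>m. c m * y ^ m)" for y
  proof (rule summable_norm_cancel)
    show "summable (\<lambda>m. norm (c m * y ^ m))"
      using H[of "\<bar>y\<bar>"] mpos by (simp add: c_def abs_mult power_abs less_imp_le)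
  qed
  have acs: "summable (\<lambda>m. \<bar>c m\<bar> * y ^ m)" for y
    using H[of y] mpos by (simp add: c_def abs_mult less_imp_le)
  define G where "G = Gamma (1 - \<beta>)"
  have G: "G > 0" using b by (simp add: G_def)
  define K where "K n = diffs c n * \<beta> / G" for n
  define w where "w s = s powr (\<beta> - 1) * (t - s) powr ((1 - \<beta>) - 1)" for s
  define T where "T n s = K n * (s powr (\<beta> * real (Suc n) - 1) * (t - s) powr ((1 - \<beta>) - 1))" for n s
  define I where "I n = a (Suc n) * mlc \<beta> n * (t powr \<beta>) ^ n" for n
  define tb where "tb = t powr \<beta>"
  have tb: "tb > 0" using t by (simp add: tb_def)
  have wnn: "w s \<ge> 0" for s by (simp add: w_def)
  have TI: "(T n has_integral I n) {0..t}" for n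
    using term_integral[OF b t, of a n] unfolding T_def K_def I_def G_def c_def .
  define B where "B = (\<Sum>n. \<bar>K n\<bar> * tb ^ n)"
  have Bs: "summable (\<lambda>n. \<bar>K n\<bar> * tb ^ n)"
  proof -
    have "summable (\<lambda>n. diffs (\<lambda>m. \<bar>c m\<bar>) n * tb ^ n * (\<beta> / G))"
      by (intro summable_mult2 termdiff_converges_all acs)
    moreover have "\<bar>K n\<bar> * tb ^ n = diffs (\<lambda>m. \<bar>c m\<bar>) n * tb ^ n * (\<beta> / G)" for n
      using G b by (simp add: K_def diffs_def abs_mult)
    ultimately show ?thesis by simp
  qed
  have Tb: "\<bar>T n s\<bar> \<le> \<bar>K n\<bar> * tb ^ n * w s" if s: "s \<in> {0..t}" for n s
  proof (cases "s = 0")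
    case True thus ?thesis by (simp add: T_def w_def)
  next
    case False
    hence s0: "s > 0" using s by auto
    have e: "s powr (\<beta> * real (Suc n) - 1) = s powr (\<beta> * real n) * s powr (\<beta> - 1)"
      by (simp add: algebra_simps flip: powr_add)
    have "s powr (\<beta> * real n) \<le> t powr (\<beta> * real n)"
      using s0 s b by (intro powr_mono2) auto
    hence le: "s powr (\<beta> * real n) \<le> tb ^ n" using t by (simp add: tb_def powr_pow_eq)
    have "\<bar>T n s\<bar> = \<bar>K n\<bar> * (s powr (\<beta> * real n) * w s)"
      unfolding T_def e w_def by (simp add: abs_mult mult_ac)
    also have "\<dots> \<le> \<bar>K n\<bar> * (tb ^ n * w s)"
      by (intro mult_left_mono mult_right_mono le wnn) auto
    finally show ?thesis by (simp add: mult_ac)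
  qed
  have Tsum: "summable (\<lambda>n. T n s)" if s: "s \<in> {0..t}" for s
    by (rule summable_comparison_test'[where N = 0, OF summable_mult2[OF Bs, of "w s"]])
       (use Tb[OF s] in auto)
  define g where "g s = (\<Sum>n. T n s)" for s
  define P where "P N s = (\<Sum>n<N. T n s)" for N s
  have PI: "(P N has_integral (\<Sum>n<N. I n)) {0..t}" for N
    unfolding P_def by (intro has_integral_sum TI) auto
  have wI: "(w has_integral t powr (\<beta> + (1 - \<beta>) - 1) * Beta \<beta> (1 - \<beta>)) {0..t}"
    unfolding w_def using beta_integral_t[OF b(1) _ t, of "1 - \<beta>"] b by simp
  have hI: "(\<lambda>s. B * w s) integrable_on {0..t}"
    using has_integral_mult_right[OF wI, of B] by blast
  have Pb: "norm (P N s) \<le> B * w s" if s: "s \<in> {0..t}" for N s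
  proof -
    have "norm (P N s) \<le> (\<Sum>n<N. \<bar>T n s\<bar>)" unfolding P_def by (simp add: sum_abs)
    also have "\<dots> \<le> (\<Sum>n<N. \<bar>K n\<bar> * tb ^ n * w s)" by (intro sum_mono Tb s)
    also have "\<dots> = (\<Sum>n<N. \<bar>K n\<bar> * tb ^ n) * w s" by (simp add: sum_distrib_right)
    also have "\<dots> \<le> B * w s"
      unfolding B_def using tb by (intro mult_right_mono sum_le_suminf Bs wnn) auto
    finally show ?thesis .
  qed
  have Pc: "(\<lambda>N. P N s) \<longlonglongrightarrow> g s" if s: "s \<in> {0..t}" for s
    unfolding P_def g_def using summable_LIMSEQ[OF Tsum[OF s]] .
  have dc: "g integrable_on {0..t}" "(\<lambda>N. integral {0..t} (P N)) \<longlonglongrightarrow> integral {0..t} g"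
    using dominated_convergence[of P "{0..t}" "\<lambda>s. B * w s" g] PI hI Pb Pc by blast+
  have "(\<lambda>N. integral {0..t} (P N)) = (\<lambda>N. \<Sum>n<N. I n)"
    using PI by (intro ext integral_unique)
  hence "I sums integral {0..t} g" using dc(2) by (simp add: sums_def)
  hence gI: "(g has_integral (\<Sum>n. I n)) {0..t}"
    using dc(1) by (simp add: sums_iff has_integral_integral)
  define f' where "f' s = (\<Sum>n. diffs c n * (s powr \<beta>) ^ n) * (\<beta> * s powr (\<beta> - 1))" for s
  have fd: "((\<lambda>s. \<Sum>m. a m * mlc \<beta> m * (s powr \<beta>) ^ m) has_real_derivative f' s) (at s)"
    if s: "s \<in> {0<..<t}" for s
  proof -
    have "((\<lambda>s. \<Sum>m. c m * (s powr \<beta>) ^ m) has_real_derivative f' s) (at s)"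
      unfolding f'_def
      by (rule DERIV_chain'[OF has_real_derivative_powr termdiffs_strong_converges_everywhere[OF cs]])
         (use s in auto)
    thus ?thesis by (simp add: c_def)
  qed
  have fg: "f' s * (t - s) powr (- \<beta>) / Gamma (1 - \<beta>) = g s" if s: "s \<in> {0<..<t}" for s
  proof -
    have s0: "s > 0" using s by auto
    have "g s = (\<Sum>n. diffs c n * (s powr \<beta>) ^ n * (\<beta> * s powr (\<beta> - 1) * (t - s) powr (- \<beta>) / G))"
      unfolding g_def
    proof (intro suminf_cong)
      fix n
      have e: "s powr (\<beta> * real (Suc n) - 1) = (s powr \<beta>) ^ n * s powr (\<beta> - 1)"
        using s0 by (simp add: algebra_simps powr_pow_eq flip: powr_add)
      show "T n s = diffs c n * (s powr \<beta>) ^ n * (\<beta> * s powr (\<beta> - 1) * (t - s) powr (- \<beta>) / G)"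
        unfolding T_def K_def e by simp
    qed
    also have "\<dots> = (\<Sum>n. diffs c n * (s powr \<beta>) ^ n) * (\<beta> * s powr (\<beta> - 1) * (t - s) powr (- \<beta>) / G)"
      by (rule suminf_mult2[symmetric]) (rule termdiff_converges_all[OF cs])
    finally show ?thesis unfolding f'_def G_def by simp
  qed
  have "((\<lambda>s. f' s * (t - s) powr (- \<beta>) / Gamma (1 - \<beta>)) has_integral (\<Sum>n. I n)) {0..t}"
  proof (rule has_integral_spike[OF _ _ gI])
    show "negligible {0, t}" by simp
    fix s assume "s \<in> {0..t} - {0, t}"
    hence "s \<in> {0<..<t}" by auto
    thus "f' s * (t - s) powr (- \<beta>) / Gamma (1 - \<beta>) = g s" by (rule fg)
  qed
  thus ?thesis unfolding caputo2_def I_def using fd by blast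
qed

lemma pcoef_abs_summable:
  assumes b: "0 < \<beta>" "\<beta> < 1" and d: "\<delta> \<ge> 0"
  shows "summable (\<lambda>m. \<bar>pcoef \<delta> k m\<bar> * mlc \<beta> m * y ^ m)"
proof (rule summable_comparison_test'[where N = 0])
  show "summable (\<lambda>m. mlc \<beta> m * (2 * \<delta> * \<bar>y\<bar>) ^ m)" by (rule mlc_summable[OF b])
  fix m :: nat
  have mp: "mlc \<beta> m > 0" using b(1) by (rule mlc_pos)
  have "norm (\<bar>pcoef \<delta> k m\<bar> * mlc \<beta> m * y ^ m) = \<bar>pcoef \<delta> k m\<bar> * \<bar>y\<bar> ^ m * mlc \<beta> m"
    using mp by (simp add: abs_mult power_abs)
  also have "\<dots> \<le> (2 * \<delta>) ^ m * \<bar>y\<bar> ^ m * mlc \<beta> m"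
    using mp by (intro mult_right_mono pcoef_bound d) auto
  finally show "norm (\<bar>pcoef \<delta> k m\<bar> * mlc \<beta> m * y ^ m) \<le> mlc \<beta> m * (2 * \<delta> * \<bar>y\<bar>) ^ m"
    by (simp add: power_mult_distrib mult_ac)
qed

lemma pcoef_summable:
  assumes b: "0 < \<beta>" "\<beta> < 1" and d: "\<delta> \<ge> 0"
  shows "summable (\<lambda>m. pcoef \<delta> k m * mlc \<beta> m * y ^ m)"
proof (rule summable_norm_cancel)
  have mp: "mlc \<beta> m > 0" for m using b(1) by (rule mlc_pos)
  show "summable (\<lambda>m. norm (pcoef \<delta> k m * mlc \<beta> m * y ^ m))"
    using pcoef_abs_summable[OF b d, of k "\<bar>y\<bar>"] mp by (simp add: abs_mult power_abs less_imp_le)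
qed

lemma caputo_pmf:
  assumes b: "0 < \<beta>" "\<beta> < 1" and d: "\<delta> > 0" and t: "t > 0"
  shows "caputo2 \<beta> (tfpp_pmf \<beta> \<delta> k) t
           (- \<delta> * tfpp_pmf \<beta> \<delta> k t + (if k = 0 then 0 else \<delta> * tfpp_pmf \<beta> \<delta> (k - 1) t))"
proof -
  define tb where "tb = t powr \<beta>"
  have S: "\<And>j. summable (\<lambda>m. pcoef \<delta> j m * mlc \<beta> m * tb ^ m)"
    using pcoef_summable[OF b] d by simp
  have C: "caputo2 \<beta> (\<lambda>s. \<Sum>m. pcoef \<delta> k m * mlc \<beta> m * (s powr \<beta>) ^ m) t
           (\<Sum>m. pcoef \<delta> k (Suc m) * mlc \<beta> m * tb ^ m)"
    unfolding tb_def using d by (intro caputo2_ps b t pcoef_abs_summable) auto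
  have "(\<Sum>m. pcoef \<delta> k (Suc m) * mlc \<beta> m * tb ^ m) =
        - \<delta> * tfpp_pmf \<beta> \<delta> k t + (if k = 0 then 0 else \<delta> * tfpp_pmf \<beta> \<delta> (k - 1) t)"
  proof (cases k)
    case 0
    have "(\<Sum>m. pcoef \<delta> k (Suc m) * mlc \<beta> m * tb ^ m) = (\<Sum>m. - \<delta> * (pcoef \<delta> k m * mlc \<beta> m * tb ^ m))"
      using 0 by (intro suminf_cong) (simp add: pcoef_rec)
    also have "\<dots> = - \<delta> * (\<Sum>m. pcoef \<delta> k m * mlc \<beta> m * tb ^ m)"
      by (rule suminf_mult[OF S])
    finally show ?thesis using 0 tfpp_series[OF b t, of \<delta> k] by (simp add: tb_def)
  next
    case (Suc k')
    have "(\<Sum>m. pcoef \<delta> k (Suc m) * mlc \<beta> m * tb ^ m) =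
          (\<Sum>m. - \<delta> * (pcoef \<delta> k m * mlc \<beta> m * tb ^ m) + \<delta> * (pcoef \<delta> k' m * mlc \<beta> m * tb ^ m))"
      using Suc by (intro suminf_cong) (simp add: pcoef_rec algebra_simps)
    also have "\<dots> = (\<Sum>m. - \<delta> * (pcoef \<delta> k m * mlc \<beta> m * tb ^ m)) + (\<Sum>m. \<delta> * (pcoef \<delta> k' m * mlc \<beta> m * tb ^ m))"
      by (rule suminf_add[symmetric]) (intro summable_mult S)+
    also have "\<dots> = - \<delta> * (\<Sum>m. pcoef \<delta> k m * mlc \<beta> m * tb ^ m) + \<delta> * (\<Sum>m. pcoef \<delta> k' m * mlc \<beta> m * tb ^ m)"
      by (simp only: suminf_mult[OF S])
    finally show ?thesis using Suc tfpp_series[OF b t, of \<delta> k] tfpp_series[OF b t, of \<delta> k']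
      by (simp add: tb_def)
  qed
  with C have "caputo2 \<beta> (\<lambda>s. \<Sum>m. pcoef \<delta> k m * mlc \<beta> m * (s powr \<beta>) ^ m) t
           (- \<delta> * tfpp_pmf \<beta> \<delta> k t + (if k = 0 then 0 else \<delta> * tfpp_pmf \<beta> \<delta> (k - 1) t))" by simp
  thus ?thesis by (rule caputo2_cong[rotated]) (rule tfpp_series[OF b])
qed

lemma Y_zero_null:
  fixes P :: "'a measure" and Y :: "'a \<Rightarrow> nat" and lam :: "nat \<Rightarrow> real"
  assumes P: "prob_space P"
    and meas: "\<And>j. {\<omega> \<in> space P. Y \<omega> = j} \<in> sets P"
    and dist: "\<And>j. j \<ge> 1 \<Longrightarrow> measure P {\<omega> \<in> space P. Y \<omega> = j} = lam j / \<delta>"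
    and lam_sum: "(\<lambda>j. lam (Suc j)) sums \<delta>" and d: "\<delta> > 0"
  shows "measure P {\<omega> \<in> space P. Y \<omega> = 0} = 0"
proof -
  interpret prob_space P by (rule P)
  define A where "A j = {\<omega> \<in> space P. Y \<omega> = j}" for j
  have "(\<lambda>j. measure P (A j)) sums measure P (\<Union>j. A j)"
    by (rule finite_measure_UNION) (auto simp: A_def meas disjoint_family_on_def)
  moreover have "(\<Union>j. A j) = space P" by (auto simp: A_def)
  ultimately have s1: "(\<lambda>j. measure P (A j)) sums 1" by (simp add: prob_space)
  have "(\<lambda>j. lam (Suc j) / \<delta>) sums (\<delta> / \<delta>)" by (intro sums_divide lam_sum)
  hence "(\<lambda>j. measure P (A (Suc j))) sums 1" using d by (simp add: A_def dist)
  hence "(\<lambda>j. measure P (A j)) sums (1 + measure P (A 0))" by (rule sums_Suc_iff[THEN iffD1])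
  with s1 have "1 = 1 + measure P (A 0)" by (rule sums_unique2)
  thus ?thesis by (simp add: A_def)
qed

lemma q_formula:
  fixes P :: "'a measure" and N :: "real \<Rightarrow> 'a \<Rightarrow> nat" and Y :: "nat \<Rightarrow> 'a \<Rightarrow> nat"
    and q :: "nat \<Rightarrow> real \<Rightarrow> real" and h :: "nat \<Rightarrow> nat \<Rightarrow> real"
  assumes P: "prob_space P"
    and Y0: "\<And>i. i \<ge> 1 \<Longrightarrow> measure P {\<omega> \<in> space P. Y i \<omega> = 0} = 0"
    and N_dist: "\<And>t n. t \<ge> 0 \<Longrightarrow> measure P {\<omega> \<in> space P. N t \<omega> = n} = tfpp_pmf \<beta> \<delta> n t"
    and NY_indep: "prob_space.indep_set P
        (sets (vimage_algebra (space P) (\<lambda>\<omega>. \<lambda>t\<in>{0::real..}. N t \<omega>)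
                 (PiM {0::real..} (\<lambda>_. count_space (UNIV::nat set)))))
        (sets (vimage_algebra (space P) (\<lambda>\<omega>. \<lambda>i\<in>{1::nat..}. Y i \<omega>)
                 (PiM {1::nat..} (\<lambda>_. count_space (UNIV::nat set)))))"
    and q_def: "\<And>n t. q n t = measure P {\<omega> \<in> space P. (\<Sum>j=1..N t \<omega>. Y j \<omega>) = n}"
    and h_def: "\<And>k n. h k n = measure P {\<omega> \<in> space P. (\<Sum>j=1..k. Y j \<omega>) = n}"
    and t: "t \<ge> 0"
  shows "q n t = (\<Sum>k\<le>n. h k n * tfpp_pmf \<beta> \<delta> k t)"
proof -
  interpret prob_space P by (rule P)
  define MA where "MA = PiM {0::real..} (\<lambda>_. count_space (UNIV::nat set))"
  define MB where "MB = PiM {1::nat..} (\<lambda>_. count_space (UNIV::nat set))"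
  define fA where "fA = (\<lambda>\<omega>. \<lambda>t\<in>{0::real..}. N t \<omega>)"
  define fB where "fB = (\<lambda>\<omega>. \<lambda>i\<in>{1::nat..}. Y i \<omega>)"
  have ind: "indep_set (sets (vimage_algebra (space P) fA MA)) (sets (vimage_algebra (space P) fB MB))"
    using NY_indep unfolding MA_def MB_def fA_def fB_def .
  define EN where "EN k = {\<omega> \<in> space P. N t \<omega> = k}" for k
  define ES where "ES k = {\<omega> \<in> space P. (\<Sum>j=1..k. Y j \<omega>) = n}" for k
  have ENA: "EN k \<in> sets (vimage_algebra (space P) fA MA)" for k
  proof -
    have "{g \<in> space MA. g t = k} \<in> sets MA"
      unfolding MA_def apply measurable using t by simp
    hence "fA -` {g \<in> space MA. g t = k} \<inter> space P \<in> sets (vimage_algebra (space P) fA MA)"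
      by (rule in_vimage_algebra)
    moreover have "fA -` {g \<in> space MA. g t = k} \<inter> space P = EN k"
      using t by (auto simp: EN_def fA_def MA_def space_PiM)
    ultimately show ?thesis by simp
  qed
  have ESB: "ES k \<in> sets (vimage_algebra (space P) fB MB)" for k
  proof -
    have "{g \<in> space MB. (\<Sum>j=1..k. g j) = n} \<in> sets MB"
      unfolding MB_def by measurable
    hence "fB -` {g \<in> space MB. (\<Sum>j=1..k. g j) = n} \<inter> space P \<in> sets (vimage_algebra (space P) fB MB)"
      by (rule in_vimage_algebra)
    moreover have "fB -` {g \<in> space MB. (\<Sum>j=1..k. g j) = n} \<inter> space P = ES k"
      by (auto simp: ES_def fB_def MB_def space_PiM)
    ultimately show ?thesis by simp
  qed
  have Yev: "{\<omega> \<in> space P. Y i \<omega> = 0} \<in> events" if i: "i \<ge> 1" for i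
  proof -
    have "{g \<in> space MB. g i = 0} \<in> sets MB"
      unfolding MB_def apply measurable using i by simp
    hence "fB -` {g \<in> space MB. g i = 0} \<inter> space P \<in> sets (vimage_algebra (space P) fB MB)"
      by (rule in_vimage_algebra)
    moreover have "fB -` {g \<in> space MB. g i = 0} \<inter> space P = {\<omega> \<in> space P. Y i \<omega> = 0}"
      using i by (auto simp: fB_def MB_def space_PiM)
    ultimately show ?thesis using indep_setD_ev2[OF ind] by auto
  qed
  have ENe: "EN k \<in> events" for k using ENA indep_setD_ev1[OF ind] by auto
  have ESe: "ES k \<in> events" for k using ESB indep_setD_ev2[OF ind] by auto
  define Q where "Q = {\<omega> \<in> space P. (\<Sum>j=1..N t \<omega>. Y j \<omega>) = n}"
  define R where "R = (\<Union>k\<in>{..n}. EN k \<inter> ES k)"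
  have "Q = (\<Union>k. EN k \<inter> ES k)" by (auto simp: Q_def EN_def ES_def)
  hence Qe: "Q \<in> events" using ENe ESe by auto
  have Re: "R \<in> events" unfolding R_def using ENe ESe by auto
  have AEY: "AE \<omega> in P. \<forall>i\<in>{1..Suc n}. Y i \<omega> \<noteq> 0"
  proof (subst AE_finite_all)
    show "finite {1..Suc n}" by simp
    show "\<forall>i\<in>{1..Suc n}. AE \<omega> in P. Y i \<omega> \<noteq> 0"
    proof
      fix i assume "i \<in> {1..Suc n}"
      hence i: "i \<ge> 1" by simp
      show "AE \<omega> in P. Y i \<omega> \<noteq> 0"
      proof (rule AE_I')
        show "{\<omega> \<in> space P. Y i \<omega> = 0} \<in> null_sets P"
          using Yev[OF i] Y0[OF i] by (auto simp: emeasure_eq_measure)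
      qed auto
    qed
  qed
  have key: "\<omega> \<in> Q \<longleftrightarrow> \<omega> \<in> R" if \<omega>: "\<omega> \<in> space P" and Yn: "\<forall>i\<in>{1..Suc n}. Y i \<omega> \<noteq> 0" for \<omega>
  proof (cases "N t \<omega> \<le> n")
    case True thus ?thesis using \<omega> by (auto simp: Q_def R_def EN_def ES_def)
  next
    case False
    hence nR: "\<omega> \<notin> R" by (auto simp: R_def EN_def)
    have "Suc n = (\<Sum>j=1..Suc n. (1::nat))" by simp
    also have "\<dots> \<le> (\<Sum>j=1..Suc n. Y j \<omega>)"
      using Yn by (intro sum_mono) (auto simp: Suc_le_eq)
    also have "\<dots> \<le> (\<Sum>j=1..N t \<omega>. Y j \<omega>)"
      using False by (intro sum_mono2) auto
    finally have "\<omega> \<notin> Q" by (auto simp: Q_def)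
    with nR show ?thesis by simp
  qed
  have "measure P Q = measure P R"
  proof (rule measure_eq_AE[OF _ Qe Re])
    show "AE \<omega> in P. (\<omega> \<in> Q) = (\<omega> \<in> R)"
      using AEY AE_space by eventually_elim (use key in blast)
  qed
  also have "\<dots> = (\<Sum>k\<le>n. measure P (EN k \<inter> ES k))"
    unfolding R_def
    by (rule finite_measure_finite_Union) (use ENe ESe in \<open>auto simp: disjoint_family_on_def EN_def\<close>)
  also have "\<dots> = (\<Sum>k\<le>n. measure P (EN k) * measure P (ES k))"
    by (intro sum.cong refl indep_setD[OF ind] ENA ESB)
  also have "\<dots> = (\<Sum>k\<le>n. h k n * tfpp_pmf \<beta> \<delta> k t)"
    by (intro sum.cong refl) (simp add: EN_def ES_def N_dist[OF t] h_def)
  finally show ?thesis unfolding q_def Q_def .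
qed

theorem mainTheorem12:
  fixes \<beta> \<delta> :: real and lam :: "nat \<Rightarrow> real"
    and P :: "'a measure"
    and N :: "real \<Rightarrow> 'a \<Rightarrow> nat" and Y :: "nat \<Rightarrow> 'a \<Rightarrow> nat"
    and q :: "nat \<Rightarrow> real \<Rightarrow> real" and h :: "nat \<Rightarrow> nat \<Rightarrow> real"
  assumes beta: "0 < \<beta>" "\<beta> < 1"
    and lam_nonneg: "\<And>j. j \<ge> 1 \<Longrightarrow> lam j \<ge> 0"
    and lam_sum: "(\<lambda>j. lam (Suc j)) sums \<delta>" and delta_pos: "\<delta> > 0"
    and lam_gf: "\<exists>M>0. \<forall>x::real. 0 < \<bar>x\<bar> \<and> \<bar>x\<bar> < M \<longrightarrow> summable (\<lambda>j. x ^ (Suc j) * lam (Suc j))"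
    and P: "prob_space P"
    and Y_indep: "prob_space.indep_vars P (\<lambda>_. count_space UNIV) Y {1..}"
    and Y_dist: "\<And>i j. i \<ge> 1 \<Longrightarrow> j \<ge> 1 \<Longrightarrow>
                   measure P {\<omega> \<in> space P. Y i \<omega> = j} = lam j / \<delta>"
    and N_dist: "\<And>t n. t \<ge> 0 \<Longrightarrow> measure P {\<omega> \<in> space P. N t \<omega> = n} = tfpp_pmf \<beta> \<delta> n t"
    and NY_indep: "prob_space.indep_set P
        (sets (vimage_algebra (space P) (\<lambda>\<omega>. \<lambda>t\<in>{0::real..}. N t \<omega>)
                 (PiM {0::real..} (\<lambda>_. count_space (UNIV::nat set)))))
        (sets (vimage_algebra (space P) (\<lambda>\<omega>. \<lambda>i\<in>{1::nat..}. Y i \<omega>)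
                 (PiM {1::nat..} (\<lambda>_. count_space (UNIV::nat set)))))"
    and q_def: "\<And>n t. q n t = measure P {\<omega> \<in> space P. (\<Sum>j=1..N t \<omega>. Y j \<omega>) = n}"
    and h_def: "\<And>k n. h k n = measure P {\<omega> \<in> space P. (\<Sum>j=1..k. Y j \<omega>) = n}"
  shows "(\<forall>t>0. has_caputo_deriv \<beta> (q 0) t (- \<delta> * tfpp_pmf \<beta> \<delta> 0 t)) \<and>
         (\<forall>n\<ge>1. \<forall>t>0. has_caputo_deriv \<beta> (q n) t
             (- \<delta> * q n t + \<delta> * (\<Sum>k=1..n. h k n * tfpp_pmf \<beta> \<delta> (k - 1) t)))"
proof -
  interpret prob_space P by (rule P)
  have Ym: "Y i \<in> measurable P (count_space UNIV)" if "i \<ge> 1" for i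
    using Y_indep that unfolding indep_vars_def2 by auto
  have Yset: "{\<omega> \<in> space P. Y i \<omega> = j} \<in> sets P" if "i \<ge> 1" for i j
  proof -
    have "Y i -` {j} \<inter> space P \<in> sets P" by (rule measurable_sets[OF Ym[OF that]]) simp
    moreover have "Y i -` {j} \<inter> space P = {\<omega> \<in> space P. Y i \<omega> = j}" by auto
    ultimately show ?thesis by simp
  qed
  have Y0: "measure P {\<omega> \<in> space P. Y i \<omega> = 0} = 0" if i: "i \<ge> 1" for i
    by (rule Y_zero_null[OF P Yset[OF i] _ lam_sum delta_pos]) (use Y_dist i in auto)
  have qf: "q n s = (\<Sum>k\<le>n. h k n * tfpp_pmf \<beta> \<delta> k s)" if "s \<ge> 0" for n s
    by (rule q_formula[OF P Y0 N_dist NY_indep q_def h_def that])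
  have h00: "h 0 0 = 1" by (simp add: h_def prob_space)
  have part1: "has_caputo_deriv \<beta> (q 0) t (- \<delta> * tfpp_pmf \<beta> \<delta> 0 t)" if t: "t > 0" for t
  proof -
    have "caputo2 \<beta> (tfpp_pmf \<beta> \<delta> 0) t (- \<delta> * tfpp_pmf \<beta> \<delta> 0 t)"
      using caputo_pmf[OF beta delta_pos t, of 0] by simp
    hence "caputo2 \<beta> (q 0) t (- \<delta> * tfpp_pmf \<beta> \<delta> 0 t)"
      by (rule caputo2_cong[rotated]) (simp add: qf h00)
    thus ?thesis by (rule caputo2_imp)
  qed
  have part2: "has_caputo_deriv \<beta> (q n) t
             (- \<delta> * q n t + \<delta> * (\<Sum>k=1..n. h k n * tfpp_pmf \<beta> \<delta> (k - 1) t))"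
    if n: "n \<ge> 1" and t: "t > 0" for n t
  proof -
    define D where "D k = - \<delta> * tfpp_pmf \<beta> \<delta> k t + (if k = 0 then 0 else \<delta> * tfpp_pmf \<beta> \<delta> (k - 1) t)" for k
    have C: "caputo2 \<beta> (\<lambda>s. \<Sum>k\<in>{..n}. h k n * tfpp_pmf \<beta> \<delta> k s) t (\<Sum>k\<in>{..n}. h k n * D k)"
      unfolding D_def by (intro caputo2_sum caputo_pmf beta delta_pos t) auto
    have "(\<Sum>k\<in>{..n}. h k n * D k) =
          (\<Sum>k\<le>n. - \<delta> * (h k n * tfpp_pmf \<beta> \<delta> k t)) +
          (\<Sum>k\<le>n. h k n * (if k = 0 then 0 else \<delta> * tfpp_pmf \<beta> \<delta> (k - 1) t))"
      unfolding D_def sum.distrib[symmetric] by (intro sum.cong refl) (simp add: algebra_simps)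
    also have "(\<Sum>k\<le>n. - \<delta> * (h k n * tfpp_pmf \<beta> \<delta> k t)) = - \<delta> * q n t"
      using t by (simp add: qf sum_distrib_left)
    also have "(\<Sum>k\<le>n. h k n * (if k = 0 then 0 else \<delta> * tfpp_pmf \<beta> \<delta> (k - 1) t))
             = (\<Sum>k=1..n. h k n * (\<delta> * tfpp_pmf \<beta> \<delta> (k - 1) t))"
    proof -
      have "(\<Sum>k\<le>n. h k n * (if k = 0 then 0 else \<delta> * tfpp_pmf \<beta> \<delta> (k - 1) t))
          = (\<Sum>k=0..n. h k n * (if k = 0 then 0 else \<delta> * tfpp_pmf \<beta> \<delta> (k - 1) t))"
        by (simp add: atMost_atLeast0)
      also have "\<dots> = (\<Sum>k=Suc 0..n. h k n * (if k = 0 then 0 else \<delta> * tfpp_pmf \<beta> \<delta> (k - 1) t))"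
        by (subst sum.atLeast_Suc_atMost) simp_all
      also have "\<dots> = (\<Sum>k=1..n. h k n * (\<delta> * tfpp_pmf \<beta> \<delta> (k - 1) t))"
        by (intro sum.cong) auto
      finally show ?thesis .
    qed
    also have "\<dots> = \<delta> * (\<Sum>k=1..n. h k n * tfpp_pmf \<beta> \<delta> (k - 1) t)"
      by (simp add: sum_distrib_left mult_ac)
    finally have V: "(\<Sum>k\<in>{..n}. h k n * D k) = - \<delta> * q n t + \<delta> * (\<Sum>k=1..n. h k n * tfpp_pmf \<beta> \<delta> (k - 1) t)" .
    have "caputo2 \<beta> (q n) t (\<Sum>k\<in>{..n}. h k n * D k)"
      by (rule caputo2_cong[OF _ C]) (simp add: qf)
    thus ?thesis unfolding V by (rule caputo2_imp)
  qed
  show ?thesis using part1 part2 by blast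
qed

end
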